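(* Let $A\subset\mathbb A$ be an essential thin annular continuum and let $S$ be a spike of $A$ with $h(S)<\infty$. Then $\overline S\cap C_{\hat A}\neq\emptyset$.
   Context: $\mathbb A=\mathbb S^1\times\mathbb R$, $\pi:\mathbb R^2\to\mathbb A$. An essential annular continuum $A$ is a continuum with $\mathbb A\setminus A$ exactly two components $\mathcal U^+(A),\mathcal U^-(A)$, unbounded above resp. below; thin means empty interior; $C_A=\overline{\mathcal U^+(A)}\cap\overline{\mathcal U^-(A)}$; $\hat A=\pi^{-1}(A)$, $C_{\hat A}=\pi^{-1}(C_A)$. For $X\subset\mathbb R^2$, $h(X)=\sup\{x_1-x_2:(x_1,y_1),(x_2,y_2)\in X\}$. Spikes of $A$ are the connected components of $\hat A\setminus C_{\hat A}$. *)

theory Defs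
  imports "HOL-Analysis.Analysis"
begin

definition Ann :: "(complex \<times> real) set" where
  "Ann = sphere 0 1 \<times> UNIV"

definition pi_A :: "real \<times> real \<Rightarrow> complex \<times> real" where
  "pi_A p = (cis (2 * pi * fst p), snd p)"

definition continuum :: "(complex \<times> real) set \<Rightarrow> bool" where
  "continuum A \<longleftrightarrow> compact A \<and> connected A \<and> A \<noteq> {}"

definition unbounded_above :: "(complex \<times> real) set \<Rightarrow> bool" where
  "unbounded_above U \<longleftrightarrow> (\<forall>M. \<exists>p\<in>U. snd p > M)"

definition unbounded_below :: "(complex \<times> real) set \<Rightarrow> bool" where
  "unbounded_below U \<longleftrightarrow> (\<forall>M. \<exists>p\<in>U. snd p < M)"

definition essential_annular_continuum :: "(complex \<times> real) set \<Rightarrow> bool" where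
  "essential_annular_continuum A \<longleftrightarrow> A \<subseteq> Ann \<and> continuum A \<and>
     (\<exists>U V. components (Ann - A) = {U, V} \<and> U \<noteq> V \<and>
            unbounded_above U \<and> unbounded_below V)"

definition Uplus :: "(complex \<times> real) set \<Rightarrow> (complex \<times> real) set" where
  "Uplus A = (THE U. U \<in> components (Ann - A) \<and> unbounded_above U)"

definition Uminus :: "(complex \<times> real) set \<Rightarrow> (complex \<times> real) set" where
  "Uminus A = (THE U. U \<in> components (Ann - A) \<and> unbounded_below U)"

definition thin :: "(complex \<times> real) set \<Rightarrow> bool" where
  "thin A \<longleftrightarrow> (top_of_set Ann) interior_of A = {}"

text \<open>C_A; closures are taken in Ann, which is closed, so ambient closure agrees.\<close>
definition CA :: "(complex \<times> real) set \<Rightarrow> (complex \<times> real) set" where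
  "CA A = closure (Uplus A) \<inter> closure (Uminus A)"

definition lift :: "(complex \<times> real) set \<Rightarrow> (real \<times> real) set" where
  "lift A = pi_A -` A"

definition spikes :: "(complex \<times> real) set \<Rightarrow> (real \<times> real) set set" where
  "spikes A = components (lift A - lift (CA A))"

definition hwidth :: "(real \<times> real) set \<Rightarrow> ereal" where
  "hwidth X = (SUP pq \<in> X \<times> X. ereal (fst (fst pq) - fst (snd pq)))"

end

theory Submission
  imports Defs
begin

lemma comps_bridge: "connected_components_of (top_of_set S) = components S"
proof -
  have "connected_component_of (top_of_set S) x y = connected_component S x y" for x y
    unfolding connected_component_of_def connected_component_def
    by (auto simp: connectedin_subtopology)
  then have "connected_component_of (top_of_set S) = connected_component S"
    by (intro ext) auto
  then show ?thesis
    unfolding connected_components_of_def components_def by simp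
qed

lemma cont_piA: "continuous_on UNIV pi_A"
  unfolding pi_A_def by (intro continuous_intros)

lemma piA_open:
  assumes "open G"
  shows "openin (top_of_set Ann) (pi_A ` G)"
  unfolding openin_euclidean_subtopology_iff
proof (intro conjI ballI)
  show "pi_A ` G \<subseteq> Ann"
    by (auto simp: pi_A_def Ann_def norm_cis)
  fix x assume "x \<in> pi_A ` G"
  then obtain q where qG: "q \<in> G" and xo: "x = pi_A q" by blast
  obtain r where r: "r > 0" "ball q r \<subseteq> G"
    using assms qG open_contains_ball by blast
  have "continuous (at 1) Arg"
    by (rule continuous_at_Arg) auto
  then obtain d where d: "d > 0" "\<And>z. dist z 1 < d \<Longrightarrow> dist (Arg z) (Arg 1) < 2*pi*(r/2)"
    unfolding continuous_at_eps_delta using r pi_gt_zero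
    by (metis mult_pos_pos half_gt_zero zero_less_numeral)
  define e where "e = min d (r/2)"
  have "e > 0" using d r by (simp add: e_def)
  moreover have "x' \<in> pi_A ` G" if x': "x' \<in> Ann" "dist x' x < e" for x'
  proof -
    obtain w y where x'eq: "x' = (w, y)" by (cases x')
    define c where "c = cis (2 * pi * fst q)"
    have nc: "norm c = 1" by (simp add: c_def norm_cis)
    have nw: "norm w = 1" using x' by (simp add: x'eq Ann_def)
    have xeq: "x = (c, snd q)" by (simp add: xo pi_A_def c_def)
    have dw: "dist w c < e" using dist_fst_le[of x' x] x' by (simp add: x'eq xeq)
    have dy: "dist y (snd q) < e" using dist_snd_le[of x' x] x' by (simp add: x'eq xeq)
    define z where "z = w / c"
    have c0: "c \<noteq> 0" using nc by auto
    have "dist z 1 = norm ((w - c) / c)" using c0 by (simp add: z_def dist_norm diff_divide_distrib)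
    also have "\<dots> = norm (w - c) / norm c" by (simp add: norm_divide)
    also have "\<dots> = dist w c" using nc by (simp add: dist_norm)
    finally have "dist z 1 < d" using dw by (simp add: e_def)
    then have az: "\<bar>Arg z\<bar> < 2*pi*(r/2)" using d(2) by (simp add: Arg_1 dist_real_def)
    define t where "t = fst q + Arg z / (2*pi)"
    have tt: "\<bar>t - fst q\<bar> < r/2"
      using az pi_gt_zero by (simp add: t_def abs_divide field_simps)
    have "dist (t, y) q \<le> dist t (fst q) + dist y (snd q)"
    proof -
      have "dist (t, y) q = sqrt ((dist t (fst q))\<^sup>2 + (dist y (snd q))\<^sup>2)"
        by (metis dist_Pair_Pair prod.collapse)
      also have "\<dots> \<le> dist t (fst q) + dist y (snd q)"
        using sqrt_sum_squares_le_sum_abs[of "dist t (fst q)" "dist y (snd q)"] by simp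
      finally show ?thesis .
    qed
    also have "\<dots> < r" using tt dy by (simp add: e_def dist_real_def)
    finally have "(t, y) \<in> G" using r by (simp add: dist_commute subset_iff)
    moreover have "pi_A (t, y) = x'"
    proof -
      have nz: "norm z = 1" using nw nc by (simp add: z_def norm_divide)
      have "2 * pi * t = 2 * pi * fst q + Arg z" using pi_gt_zero by (simp add: t_def field_simps)
      then have "cis (2*pi*t) = c * cis (Arg z)" by (simp add: c_def cis_mult)
      also have "\<dots> = c * z"
      proof -
        have "z \<noteq> 0" using nz by auto
        then have "cis (Arg z) = sgn z" by (rule cis_Arg)
        then show ?thesis using nz by (simp add: sgn_div_norm)
      qed
      also have "\<dots> = w" using c0 by (simp add: z_def)
      finally show ?thesis by (simp add: pi_A_def x'eq)
    qed
    ultimately show ?thesis by (metis image_eqI)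
  qed
  ultimately show "\<exists>e>0. \<forall>x'\<in>Ann. dist x' x < e \<longrightarrow> x' \<in> pi_A ` G" by blast
qed

lemma Ann_closed: "closed Ann"
  unfolding Ann_def by (intro closed_Times closed_sphere closed_UNIV)

lemma Ann_connected: "connected Ann"
  unfolding Ann_def by (intro connected_Times connected_sphere connected_UNIV) auto

lemma Ann_locally_connected: "locally connected Ann"
  unfolding Ann_def
  by (rule locally_Times[OF locally_connected_sphere locally_connected_UNIV]) (simp add: connected_Times)

lemma unique_comp:
  assumes "compact A" "A \<subseteq> Ann" "\<And>p. p \<in> A \<Longrightarrow> \<bar>snd p\<bar> \<le> M"
    and H: "H = sphere 0 1 \<times> I" "connected I" "I \<noteq> {}" "\<And>t. t \<in> I \<Longrightarrow> \<bar>t\<bar> > M"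
    and P: "\<And>W. W \<in> components (Ann - A) \<Longrightarrow> P W \<Longrightarrow> W \<inter> H \<noteq> {}"
    and W1: "W1 \<in> components (Ann - A)" "P W1"
    and W2: "W2 \<in> components (Ann - A)" "P W2"
  shows "W1 = W2"
proof -
  have cH: "connected H" using H by (auto intro!: connected_Times connected_sphere)
  have HA: "H \<subseteq> Ann - A"
  proof
    fix x assume x: "x \<in> H"
    have xs: "snd x \<in> I" "fst x \<in> sphere 0 1" using x H(1) by (auto simp: mem_Times_iff)
    have "x \<notin> A"
    proof
      assume "x \<in> A"
      then have "\<bar>snd x\<bar> \<le> M" by (rule assms(3))
      moreover have "M < \<bar>snd x\<bar>" by (rule H(4)[OF xs(1)])
      ultimately show False by simp
    qed
    moreover have "x \<in> Ann" using xs(2) by (cases x) (simp add: Ann_def)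
    ultimately show "x \<in> Ann - A" by simp
  qed
  have h1: "H \<subseteq> W1" by (rule components_maximal[OF W1(1) cH HA P[OF W1]])
  have h2: "H \<subseteq> W2" by (rule components_maximal[OF W2(1) cH HA P[OF W2]])
  have "H \<noteq> {}" using H(1,3) by simp
  with h1 h2 have "W1 \<inter> W2 \<noteq> {}" by auto
  then show ?thesis using components_nonoverlap[OF W1(1) W2(1)] by simp
qed

lemma CA_meets_A:
  assumes "essential_annular_continuum A" "thin A"
  shows "A \<inter> CA A \<noteq> {}"
proof -
  have AAnn: "A \<subseteq> Ann" and cont: "continuum A" and ex: "\<exists>U V. components (Ann - A) = {U, V} \<and> U \<noteq> V \<and>
            unbounded_above U \<and> unbounded_below V"
    using assms(1) unfolding essential_annular_continuum_def by simp_all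
  from ex obtain U V where comps: "components (Ann - A) = {U, V}" and UV: "U \<noteq> V"
    and ua: "unbounded_above U" and ub: "unbounded_below V" by blast
  have cA: "compact A" using cont by (simp add: continuum_def)
  obtain M where M: "\<And>p. p \<in> A \<Longrightarrow> \<bar>snd p\<bar> \<le> M"
  proof -
    obtain B where "\<forall>x\<in>A. norm x \<le> B" using compact_imp_bounded[OF cA] bounded_iff by blast
    then have "\<bar>snd p\<bar> \<le> B" if "p \<in> A" for p
    proof -
      have "norm (snd p) \<le> norm p" unfolding norm_prod_def by (rule real_sqrt_sum_squares_ge2)
      also have "norm p \<le> B" using \<open>\<forall>x\<in>A. norm x \<le> B\<close> that by blast
      finally show ?thesis by simp
    qed
    then show ?thesis using that by auto
  qed
  have Uc: "U \<in> components (Ann - A)" and Vc: "V \<in> components (Ann - A)" using comps by auto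
  have Up: "Uplus A = U"
    unfolding Uplus_def
  proof (rule the_equality)
    show "U \<in> components (Ann - A) \<and> unbounded_above U" using Uc ua by simp
    fix W assume W: "W \<in> components (Ann - A) \<and> unbounded_above W"
    show "W = U"
    proof (rule unique_comp[OF cA AAnn M refl, where I="{M+1<..}" and P=unbounded_above])
      show "W \<inter> sphere 0 1 \<times> {M+1<..} \<noteq> {}" if Wc: "W \<in> components (Ann - A)" and Wu: "unbounded_above W" for W
      proof -
        obtain p where "p \<in> W" "snd p > M + 1" using Wu unfolding unbounded_above_def by blast
        moreover have "W \<subseteq> Ann" using Wc in_components_subset by blast
        ultimately show ?thesis by (cases p) (auto simp: Ann_def)
      qed
    qed (use W Uc ua in auto)
  qed
  have Um: "Uminus A = V"
    unfolding Uminus_def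
  proof (rule the_equality)
    show "V \<in> components (Ann - A) \<and> unbounded_below V" using Vc ub by simp
    fix W assume W: "W \<in> components (Ann - A) \<and> unbounded_below W"
    show "W = V"
    proof (rule unique_comp[OF cA AAnn M refl, where I="{..<-M-1}" and P=unbounded_below])
      show "W \<inter> sphere 0 1 \<times> {..<-M-1} \<noteq> {}" if Wc: "W \<in> components (Ann - A)" and Wu: "unbounded_below W" for W
      proof -
        obtain p where "p \<in> W" "snd p < -M - 1" using Wu unfolding unbounded_below_def by blast
        moreover have "W \<subseteq> Ann" using Wc in_components_subset by blast
        ultimately show ?thesis by (cases p) (auto simp: Ann_def)
      qed
    qed (use W Vc ub in auto)
  qed
  have AUV: "Ann - A = U \<union> V" using Union_components[of "Ann - A"] comps by simp
  have dense: "Ann \<subseteq> closure (Ann - A)"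
  proof
    fix p assume p: "p \<in> Ann"
    show "p \<in> closure (Ann - A)"
    proof (rule ccontr)
      assume np: "p \<notin> closure (Ann - A)"
      have "open (- closure (Ann - A))" by (simp add: open_Compl)
      then obtain e where e: "e > 0" "ball p e \<subseteq> - closure (Ann - A)"
        using np open_contains_ball_eq[of "- closure (Ann - A)" p] by auto
      have T: "Ann \<inter> ball p e \<subseteq> A"
      proof
        fix y assume y: "y \<in> Ann \<inter> ball p e"
        then have "y \<notin> closure (Ann - A)" using e(2) by auto
        then have "y \<notin> Ann - A" using closure_subset[of "Ann - A"] by blast
        then show "y \<in> A" using y by simp
      qed
      have "openin (top_of_set Ann) (Ann \<inter> ball p e)" by (simp add: openin_open_Int)
      then have "Ann \<inter> ball p e \<subseteq> (top_of_set Ann) interior_of A"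
        using T by (simp add: interior_of_maximal)
      then show False using assms(2) p e(1) unfolding thin_def by auto
    qed
  qed
  have UAnn: "U \<subseteq> Ann" "V \<subseteq> Ann" using AUV by auto
  have cl: "Ann \<subseteq> closure U \<union> closure V" using dense AUV by (simp add: closure_Un)
  have clU: "closure U \<subseteq> Ann" "closure V \<subseteq> Ann"
    using UAnn Ann_closed closure_minimal by blast+
  have ne: "U \<noteq> {}" "V \<noteq> {}" using Uc Vc in_components_nonempty by blast+
  have "closure U \<inter> closure V \<noteq> {}"
  proof
    assume dis: "closure U \<inter> closure V = {}"
    have "closure U \<inter> Ann \<noteq> {}" using ne(1) closure_subset UAnn(1) by blast
    moreover have "closure V \<inter> Ann \<noteq> {}" using ne(2) closure_subset UAnn(2) by blast
    moreover have "closure U \<inter> closure V \<inter> Ann = {}" using dis by simp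
    ultimately show False using Ann_connected cl unfolding connected_closed
      by (meson closed_closure)
  qed
  then obtain c where c: "c \<in> closure U" "c \<in> closure V" by blast
  have lcA: "locally connected (Ann - A)"
    by (rule locally_open_subset[OF Ann_locally_connected])
       (simp add: Diff_eq openin_open_Int compact_imp_closed[OF cA] open_Compl)
  have opn: "openin (top_of_set Ann) W" if "W \<in> components (Ann - A)" for W
  proof -
    have "openin (top_of_set (Ann - A)) W" using openin_components_locally_connected[OF lcA that] .
    moreover have "openin (top_of_set Ann) (Ann - A)"
      by (simp add: Diff_eq openin_open_Int compact_imp_closed[OF cA] open_Compl)
    ultimately show ?thesis using openin_trans by blast
  qed
  have key: False if W: "W \<in> components (Ann - A)" "W' \<in> components (Ann - A)" "W \<noteq> W'"
      "c \<in> W" "c \<in> closure W'" for W W'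
  proof -
    obtain G where G: "open G" "W = Ann \<inter> G" using opn[OF W(1)] openin_open by blast
    have "G \<inter> closure W' \<noteq> {}" using G W by blast
    then have "G \<inter> W' \<noteq> {}" using open_Int_closure_eq_empty[OF G(1)] by blast
    moreover have "W' \<subseteq> Ann" using W(2) in_components_subset by blast
    ultimately have "W \<inter> W' \<noteq> {}" using G by blast
    then show False using components_nonoverlap[OF W(1,2)] W(3) by blast
  qed
  have "c \<in> A"
  proof (rule ccontr)
    assume "c \<notin> A"
    moreover have "c \<in> Ann" using c clU by blast
    ultimately have "c \<in> U \<or> c \<in> V" using AUV by blast
    then show False using key[OF Uc Vc UV _ c(2)] key[OF Vc Uc UV[symmetric] _ c(1)] by blast
  qed
  then show ?thesis using c unfolding CA_def Up Um by blast
qed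

theorem mainTheorem15:
  assumes "essential_annular_continuum A"
    and "thin A"
    and "S \<in> spikes A"
    and "hwidth S < \<infinity>"
  shows "closure S \<inter> lift (CA A) \<noteq> {}"
proof
  assume contra: "closure S \<inter> lift (CA A) = {}"
  define L where "L = lift A"
  define K0 where "K0 = lift (CA A)"
  define Xs where "Xs = L - K0"
  have AAnn: "A \<subseteq> Ann" and cont: "continuum A"
    using assms(1) unfolding essential_annular_continuum_def by simp_all
  have cA: "compact A" and conA: "connected A" using cont by (simp_all add: continuum_def)
  obtain M where M: "\<And>p. p \<in> A \<Longrightarrow> \<bar>snd p\<bar> \<le> M"
  proof -
    obtain B where B: "\<forall>x\<in>A. norm x \<le> B" using compact_imp_bounded[OF cA] bounded_iff by blast
    have "\<bar>snd p\<bar> \<le> B" if "p \<in> A" for p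
    proof -
      have "norm (snd p) \<le> norm p" unfolding norm_prod_def by (rule real_sqrt_sum_squares_ge2)
      also have "norm p \<le> B" using B that by blast
      finally show ?thesis by simp
    qed
    then show ?thesis using that by auto
  qed
  have clCA: "closed (CA A)" unfolding CA_def by (intro closed_Int closed_closure)
  have clL: "closed L" unfolding L_def lift_def
    by (rule closed_vimage[OF compact_imp_closed[OF cA] cont_piA])
  have clK0: "closed K0" unfolding K0_def lift_def
    by (rule closed_vimage[OF clCA cont_piA])
  have Sc: "S \<in> components Xs" using assms(3) by (simp add: spikes_def Xs_def L_def K0_def)
  have Sne: "S \<noteq> {}" using Sc in_components_nonempty by blast
  have SX: "S \<subseteq> Xs" using Sc in_components_subset by blast
  have cS: "connected S" using Sc in_components_connected by blast
  obtain s0 where s0: "s0 \<in> S" using Sne by blast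
  have hw: "ereal (fst p - fst q) \<le> hwidth S" if "p \<in> S" "q \<in> S" for p q
    unfolding hwidth_def
    using SUP_upper[of "(p,q)" "S \<times> S" "\<lambda>pq. ereal (fst (fst pq) - fst (snd pq))"] that by simp
  obtain B where B: "hwidth S = ereal B"
  proof (cases "hwidth S")
    case (real r) then show ?thesis using that by simp
  next
    case PInf then show ?thesis using assms(4) by simp
  next
    case MInf then show ?thesis using hw[OF s0 s0] by simp
  qed
  have fb: "fst p \<in> {fst s0 - B .. fst s0 + B}" if "p \<in> S" for p
    using hw[OF that s0] hw[OF s0 that] B by auto
  have sb: "snd p \<in> {-M .. M}" if "p \<in> S" for p
  proof -
    have "p \<in> Xs" using SX that by blast
    then have "pi_A p \<in> A" by (simp add: Xs_def L_def lift_def)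
    then have "\<bar>snd (pi_A p)\<bar> \<le> M" by (rule M)
    then show ?thesis by (simp add: pi_A_def abs_le_iff)
  qed
  have "S \<subseteq> {fst s0 - B .. fst s0 + B} \<times> {-M .. M}"
    using fb sb by (auto simp: mem_Times_iff)
  moreover have "bounded ({fst s0 - B .. fst s0 + B} \<times> {-M .. M})"
    by (intro bounded_Times compact_imp_bounded compact_Icc)
  ultimately have bS: "bounded S" by (rule bounded_subset[rotated])
  have "closure S \<subseteq> L" using SX clL by (intro closure_minimal) (auto simp: Xs_def)
  then have clSX: "closure S \<subseteq> Xs" using contra by (auto simp: Xs_def K0_def)
  have "S \<inter> closure S \<noteq> {}" using Sne closure_subset by blast
  then have "closure S \<subseteq> S"
    by (rule components_maximal[OF Sc connected_imp_connected_closure[OF cS] clSX])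
  then have "closed S" using closure_subset_eq by blast
  then have cmpS: "compact S" using bS by (simp add: compact_eq_bounded_closed)
  have SK0: "S \<inter> K0 = {}" using SX by (auto simp: Xs_def)
  obtain O1 O2 where O: "open O1" "compact (closure O1)" "open O2" "S \<subseteq> O1" "K0 \<subseteq> O2" "O1 \<inter> O2 = {}"
    using separation_normal_compact[OF cmpS clK0 SK0] by blast
  have "O2 \<inter> O1 = {}" using O(6) by blast
  then have "O2 \<inter> closure O1 = {}" using open_Int_closure_eq_empty[OF O(3)] by blast
  then have disO1: "closure O1 \<inter> K0 = {}" using O(5) by blast
  define X where "X = top_of_set Xs"
  have lcL: "locally_compact_space (top_of_set L)"
    by (rule locally_compact_space_closed_subset[OF locally_compact_space_euclidean])
       (simp add: clL flip: closed_closedin)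
  have oXs: "openin (top_of_set L) Xs"
    unfolding Xs_def Diff_eq by (rule openin_open_Int) (simp add: clK0 open_Compl)
  have "locally_compact_space (subtopology (top_of_set L) Xs)"
    by (rule locally_compact_space_open_subset[OF _ lcL oXs]) (simp add: Hausdorff_space_subtopology)
  moreover have "subtopology (top_of_set L) Xs = X"
    by (simp add: X_def subtopology_subtopology Xs_def Int_absorb1 Diff_subset)
  ultimately have lcX: "locally_compact_space X" by simp
  have hX: "Hausdorff_space X" by (simp add: X_def Hausdorff_space_subtopology)
  have SC: "S \<in> connected_components_of X" by (simp add: X_def comps_bridge Sc)
  have SKX: "compactin X S" by (simp add: X_def compactin_subtopology cmpS SX)
  have WO: "openin X (Xs \<inter> O1)" by (simp add: X_def openin_open_Int O(1))
  have SW: "S \<subseteq> Xs \<inter> O1" using SX O(4) by blast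
  have topX: "topspace X = Xs" by (simp add: X_def)
  obtain Uc Vc where UV: "openin X Uc" "openin X Vc" "disjnt Uc Vc" "Uc \<union> Vc = topspace X"
      "S \<subseteq> Uc" "Uc \<subseteq> Xs \<inter> O1"
    using wilder_locally_compact_component_thm[OF lcX hX SC SKX WO SW] by blast
  have "topspace X - Uc = Vc" using UV(3,4) by (auto simp: disjnt_def)
  then have "closedin X Uc" using UV(1,2) by (simp add: closedin_def openin_subset)
  then obtain T where T: "closed T" "Uc = Xs \<inter> T" by (auto simp: X_def closedin_closed)
  have "closure Uc \<subseteq> T" using T by (intro closure_minimal) auto
  moreover have "closure Uc \<subseteq> closure O1" using UV(6) by (intro closure_mono) auto
  moreover have "closure Uc \<subseteq> L" using UV(6) clL by (intro closure_minimal) (auto simp: Xs_def)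
  ultimately have "closure Uc \<subseteq> Uc" using disO1 T(2) by (auto simp: Xs_def)
  then have "closed Uc" using closure_subset_eq by blast
  moreover have "bounded Uc"
    using UV(6) closure_subset[of O1] compact_imp_bounded[OF O(2)] by (meson bounded_subset le_infE subset_trans)
  ultimately have cmpU: "compact Uc" by (simp add: compact_eq_bounded_closed)
  define P where "P = pi_A ` Uc"
  have cmpP: "compact P" unfolding P_def
    by (rule compact_continuous_image[OF continuous_on_subset[OF cont_piA] cmpU]) simp
  obtain G where G: "open G" "Uc = Xs \<inter> G" using UV(1) by (auto simp: X_def openin_open)
  obtain G' where G': "open G'" "pi_A ` G = Ann \<inter> G'"
    using piA_open[OF G(1)] by (auto simp: openin_open)
  have Peq: "P = A \<inter> (G' \<inter> - CA A)"
  proof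
    show "P \<subseteq> A \<inter> (G' \<inter> - CA A)"
    proof
      fix y assume "y \<in> P"
      then obtain q where q: "q \<in> Uc" "y = pi_A q" by (auto simp: P_def)
      then have "q \<in> Xs" "q \<in> G" using G by auto
      then have "y \<in> A" "y \<notin> CA A" "y \<in> pi_A ` G"
        using q by (auto simp: Xs_def L_def K0_def lift_def)
      then show "y \<in> A \<inter> (G' \<inter> - CA A)" using G' by auto
    qed
  next
    show "A \<inter> (G' \<inter> - CA A) \<subseteq> P"
    proof
      fix y assume y: "y \<in> A \<inter> (G' \<inter> - CA A)"
      then have "y \<in> pi_A ` G" using G' AAnn by auto
      then obtain q where q: "q \<in> G" "y = pi_A q" by auto
      then have "q \<in> Xs" using y by (auto simp: Xs_def L_def K0_def lift_def)
      then have "q \<in> Uc" using G q by auto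
      then show "y \<in> P" using q by (auto simp: P_def)
    qed
  qed
  have oP: "openin (top_of_set A) P"
    unfolding Peq by (rule openin_open_Int) (simp add: G'(1) clCA open_Int open_Compl)
  have PA: "P \<subseteq> A" using Peq by blast
  have cP: "closedin (top_of_set A) P"
    by (rule closed_subset[OF PA compact_imp_closed[OF cmpP]])
  have "P \<noteq> {}" using Sne UV(5) by (auto simp: P_def)
  then have "P = A" using conA oP cP unfolding connected_clopen by blast
  moreover obtain c where "c \<in> A" "c \<in> CA A" using CA_meets_A[OF assms(1,2)] by blast
  ultimately show False using Peq by blast
qed

end
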